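(* Let $x\in Y$. Then the orbit $W^v.x$ is bounded above for $\le_{Q^\vee}$ (i.e. there is $y\in Y$ with $z\le_{Q^\vee}y$ for all $z\in W^v.x$) if and only if $x\in Y^+$.
   Context: $I$ finite, $A=(a_{i,j})$ a generalized Cartan matrix, $X,Y$ dual free $\mathbb Z$-modules of finite rank with free families $(\alpha_i)\subset X$, $(\alpha_i^\vee)\subset Y$, $\alpha_j(\alpha_i^\vee)=a_{i,j}$; $\mathbb A=Y\otimes\mathbb R$; $r_i(v)=v-\alpha_i(v)\alpha_i^\vee$; $W^v=\langle r_i:i\in I\rangle$; $Q^\vee_+=\bigoplus\mathbb N\alpha_i^\vee$, $x\le_{Q^\vee}y$ iff $y-x\in Q^\vee_+$; $C^v_f=\{v:\alpha_i(v)>0\ \forall i\}$; Tits cone $\mathcal T=\bigcup_{w\in W^v}w\overline{C^v_f}$; $Y^+=Y\cap\mathcal T$. *)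

theory Defs
  imports "HOL-Analysis.Analysis"
begin

text \<open>The real vector space A = Y (x) R is modelled as real^'n (rank n = CARD('n));
  Y is the integer lattice in it; X = Hom(Y,Z) is identified with Z^n via the dual
  basis, so alpha(v) is the inner product alpha \<bullet> v.\<close>

definition Ylat :: "(real^'n) set" where
  "Ylat = {v. \<forall>k. v $ k \<in> \<int>}"

definition gen_cartan :: "('i \<Rightarrow> 'i \<Rightarrow> int) \<Rightarrow> bool" where
  "gen_cartan A \<longleftrightarrow> (\<forall>i. A i i = 2) \<and> (\<forall>i j. i \<noteq> j \<longrightarrow> A i j \<le> 0)
     \<and> (\<forall>i j. A i j = 0 \<longleftrightarrow> A j i = 0)"

definition Z_free :: "('i::finite \<Rightarrow> real^'n) \<Rightarrow> bool" where
  "Z_free v \<longleftrightarrow> (\<forall>c::'i \<Rightarrow> int. (\<Sum>i\<in>UNIV. of_int (c i) *\<^sub>R v i) = 0 \<longrightarrow> (\<forall>i. c i = 0))"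

definition refl_i :: "('i \<Rightarrow> real^'n) \<Rightarrow> ('i \<Rightarrow> real^'n) \<Rightarrow> 'i \<Rightarrow> real^'n \<Rightarrow> real^'n" where
  "refl_i \<alpha> \<alpha>v i v = v - (\<alpha> i \<bullet> v) *\<^sub>R \<alpha>v i"

text \<open>W^v: group generated by the r_i (each r_i is an involution, so the monoid
  generated suffices).\<close>
inductive_set Wv :: "('i \<Rightarrow> real^'n) \<Rightarrow> ('i \<Rightarrow> real^'n) \<Rightarrow> (real^'n \<Rightarrow> real^'n) set"
  for \<alpha> \<alpha>v where
  Wv_id: "id \<in> Wv \<alpha> \<alpha>v"
| Wv_step: "w \<in> Wv \<alpha> \<alpha>v \<Longrightarrow> refl_i \<alpha> \<alpha>v i \<circ> w \<in> Wv \<alpha> \<alpha>v"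

definition Qplus :: "('i::finite \<Rightarrow> real^'n) \<Rightarrow> (real^'n) set" where
  "Qplus \<alpha>v = {(\<Sum>i\<in>UNIV. of_nat (m i) *\<^sub>R \<alpha>v i) | m :: 'i \<Rightarrow> nat. True}"

definition qle :: "('i::finite \<Rightarrow> real^'n) \<Rightarrow> real^'n \<Rightarrow> real^'n \<Rightarrow> bool" where
  "qle \<alpha>v x y \<longleftrightarrow> y - x \<in> Qplus \<alpha>v"

definition Cvf :: "('i \<Rightarrow> real^'n) \<Rightarrow> (real^'n) set" where
  "Cvf \<alpha> = {v. \<forall>i. \<alpha> i \<bullet> v > 0}"

definition tits_cone :: "('i \<Rightarrow> real^'n) \<Rightarrow> ('i \<Rightarrow> real^'n) \<Rightarrow> (real^'n) set" where
  "tits_cone \<alpha> \<alpha>v = (\<Union>w\<in>Wv \<alpha> \<alpha>v. w ` closure (Cvf \<alpha>))"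

end

theory Submission
  imports Defs
begin
primrec cf :: "'i \<Rightarrow> 'i \<Rightarrow> real \<Rightarrow> real \<Rightarrow> real \<Rightarrow> real \<Rightarrow> 'i list \<Rightarrow> real \<times> real" where
  "cf s t a b x y [] = (0,0)"
| "cf s t a b x y (j#w) = (case cf s t a b x y w of (c1, c2) \<Rightarrow>
      if j = s then (- c1 - x + a * c2, c2) else (c1, - c2 - y + b * c1))"

primrec E :: "'i \<Rightarrow> 'i \<Rightarrow> nat \<Rightarrow> 'i list" where
  "E s t 0 = []"
| "E s t (Suc k) = (if even k then t else s) # E s t k"

lemma E_set: "set (E s t k) \<subseteq> {s,t}" by (induction k) auto
lemma E_len[simp]: "length (E s t k) = k" by (induction k) auto

lemma E_split: "\<exists>F. E s t (d + m) = F @ E s t m \<and> set F \<subseteq> {s,t} \<and> length F = d"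
proof (induction d)
  case 0 then show ?case by simp
next
  case (Suc d)
  then obtain F where "E s t (d + m) = F @ E s t m" "set F \<subseteq> {s,t}" "length F = d" by blast
  then show ?case by (intro exI[of _ "(if even (d+m) then t else s) # F"]) auto
qed

lemma E_last: "m > 0 \<Longrightarrow> \<exists>G. E t s m = G @ [s] \<and> set G \<subseteq> {s,t} \<and> length G = m - 1"
proof (induction m)
  case 0 then show ?case by simp
next
  case (Suc m)
  show ?case
  proof (cases "m = 0")
    case True then show ?thesis by simp
  next
    case False
    then obtain G where "E t s m = G @ [s]" "set G \<subseteq> {s,t}" "length G = m - 1" using Suc by auto
    then show ?thesis using False by (intro exI[of _ "(if even m then s else t) # G"]) auto
  qed
qed

lemma alt_E: "s \<noteq> t \<Longrightarrow> set v \<subseteq> {s,t} \<Longrightarrow> (\<forall>p x q. v \<noteq> p @ [x,x] @ q) \<Longrightarrow> (v = [] \<or> last v = t)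
   \<Longrightarrow> v = E s t (length v)"
proof (induction v)
  case Nil then show ?case by simp
next
  case (Cons x v)
  show ?case
  proof (cases "v = []")
    case True then show ?thesis using Cons by simp
  next
    case False
    have nd: "\<forall>p y q. v \<noteq> p @ [y,y] @ q"
    proof (intro allI notI)
      fix p y q assume "v = p @ [y,y] @ q"
      then have "x # v = (x#p) @ [y,y] @ q" by simp
      then show False using Cons.prems(3) by blast
    qed
    have IH: "v = E s t (length v)" using Cons False nd by auto
    obtain k where k: "length v = Suc k" using False by (cases v) auto
    have hv: "hd v = (if even k then t else s)" using IH k by (metis E.simps(2) list.sel(1))
    have "x \<noteq> hd v"
    proof
      assume "x = hd v"
      then have "x # v = [] @ [x,x] @ tl v" using False by simp
      then show False using Cons.prems(3) by blast
    qed
    then have "x = (if even (Suc k) then t else s)" using hv Cons.prems(2) by auto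
    then show ?thesis using IH k by simp
  qed
qed

lemma cf_E_Suc: "s \<noteq> t \<Longrightarrow> cf s t a b x y (E s t (Suc k)) =
  (if even k then (fst (cf s t a b x y (E s t k)), - snd (cf s t a b x y (E s t k)) - y + b * fst (cf s t a b x y (E s t k)))
   else (- fst (cf s t a b x y (E s t k)) - x + a * snd (cf s t a b x y (E s t k)), snd (cf s t a b x y (E s t k))))"
  by (simp split: prod.split)

lemma inv4:
  fixes a b :: real
  assumes st: "s \<noteq> t" and a: "0 \<le> a" and b: "0 \<le> b" and ab: "4 \<le> a * b"
  shows "0 \<le> 1 + fst (cf s t a b 2 (-b) (E s t k)) \<and> 0 \<le> snd (cf s t a b 2 (-b) (E s t k)) \<and>
    (even k \<longrightarrow> 2 * snd (cf s t a b 2 (-b) (E s t k)) \<le> b * (1 + fst (cf s t a b 2 (-b) (E s t k)))) \<and>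
    (odd k \<longrightarrow> 2 * (1 + fst (cf s t a b 2 (-b) (E s t k))) \<le> a * snd (cf s t a b 2 (-b) (E s t k)))"
proof (induction k)
  case 0 then show ?case using b by simp
next
  case (Suc k)
  define p where "p = 1 + fst (cf s t a b 2 (-b) (E s t k))"
  define q where "q = snd (cf s t a b 2 (-b) (E s t k))"
  have IH: "0 \<le> p" "0 \<le> q" "even k \<Longrightarrow> 2 * q \<le> b * p" "odd k \<Longrightarrow> 2 * p \<le> a * q"
    using Suc unfolding p_def q_def by auto
  show ?case
  proof (cases "even k")
    case True
    have e1: "1 + fst (cf s t a b 2 (-b) (E s t (Suc k))) = p" using True st unfolding p_def by (simp split: prod.split)
    have e2: "snd (cf s t a b 2 (-b) (E s t (Suc k))) = b * p - q" using True st unfolding p_def q_def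
      by (simp add: algebra_simps split: prod.split)
    have h0: "2 * q \<le> b * p" using IH(3) True by simp
    have h1: "a * (2 * q) \<le> a * (b * p)" by (rule mult_left_mono[OF h0 a])
    have h2: "4 * p \<le> (a * b) * p" using ab IH(1) by (rule mult_right_mono)
    have "2 * p \<le> a * (b * p - q)" using h1 h2 by (simp add: algebra_simps)
    then show ?thesis unfolding e1 e2 using True IH h0 by auto
  next
    case False
    have e1: "1 + fst (cf s t a b 2 (-b) (E s t (Suc k))) = a * q - p" using False st unfolding p_def q_def
      by (simp add: algebra_simps split: prod.split)
    have e2: "snd (cf s t a b 2 (-b) (E s t (Suc k))) = q" using False st unfolding q_def by (simp split: prod.split)
    have h0: "2 * p \<le> a * q" using IH(4) False by simp
    have h1: "b * (2 * p) \<le> b * (a * q)" by (rule mult_left_mono[OF h0 b])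
    have h2: "4 * q \<le> (a * b) * q" using ab IH(2) by (rule mult_right_mono)
    have "2 * q \<le> b * (a * q - p)" using h1 h2 by (simp add: algebra_simps)
    then show ?thesis unfolding e1 e2 using False IH h0 by auto
  qed
qed

lemma less6: "(k::nat) < 6 \<Longrightarrow> k = 0 \<or> k = 1 \<or> k = 2 \<or> k = 3 \<or> k = 4 \<or> k = 5" by auto

lemma cf_small_aux:
  fixes ia ib :: int
  assumes st: "s \<noteq> t" and k: "k < 6"
    and h: "(ia = 0 \<and> ib = 0 \<and> k < 2) \<or> (ia = 1 \<and> ib = 1 \<and> k < 3) \<or> (ia = 1 \<and> ib = 2 \<and> k < 4) \<or> (ia = 2 \<and> ib = 1 \<and> k < 4)
     \<or> (ia = 1 \<and> ib = 3) \<or> (ia = 3 \<and> ib = 1)"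
  shows "0 \<le> 1 + fst (cf s t (of_int ia) (of_int ib) 2 (- of_int ib) (E s t k)) \<and> 0 \<le> snd (cf s t (of_int ia) (of_int ib) 2 (- of_int ib) (E s t k))"
proof -
  consider "k = 0" | "k = 1" | "k = 2" | "k = 3" | "k = 4" | "k = 5" using k less6 by blast
  then show ?thesis
  proof cases
    case 1 then show ?thesis using h st by auto
  next
    case 2 then show ?thesis using h st by (elim disjE; simp add: numeral_eq_Suc)
  next
    case 3 then show ?thesis using h st by (elim disjE; simp add: numeral_eq_Suc)
  next
    case 4 then show ?thesis using h st by (elim disjE; simp add: numeral_eq_Suc)
  next
    case 5 then show ?thesis using h st by (elim disjE; simp add: numeral_eq_Suc)
  next
    case 6 then show ?thesis using h st by (elim disjE; simp add: numeral_eq_Suc)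
  qed
qed

lemma int_small: "0 \<le> (i::int) \<Longrightarrow> i \<le> 3 \<Longrightarrow> i = 0 \<or> i = 1 \<or> i = 2 \<or> i = 3" by auto

lemma cf_small:
  fixes ia ib :: int
  assumes st: "s \<noteq> t" and a: "0 \<le> ia" and b: "0 \<le> ib" and z: "ia = 0 \<longleftrightarrow> ib = 0"
    and c: "(ia*ib = 0 \<and> k < 2) \<or> (ia*ib=1 \<and> k<3) \<or> (ia*ib = 2 \<and> k < 4) \<or> (ia*ib = 3 \<and> k < 6)"
  shows "0 \<le> 1 + fst (cf s t (of_int ia) (of_int ib) 2 (- of_int ib) (E s t k)) \<and> 0 \<le> snd (cf s t (of_int ia) (of_int ib) 2 (- of_int ib) (E s t k))"
proof (rule cf_small_aux[OF st])
  show "k < 6" using c by auto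
  have p3: "ia * ib \<le> 3" using c by auto
  have ia3: "ia \<le> 3"
  proof (cases "ib = 0")
    case True then show ?thesis using z by simp
  next
    case False then have "ia * 1 \<le> ia * ib" using a b by (intro mult_left_mono) auto
    then show ?thesis using p3 by simp
  qed
  have ib3: "ib \<le> 3"
  proof (cases "ia = 0")
    case True then show ?thesis using z by simp
  next
    case False then have "1 * ib \<le> ia * ib" using a b by (intro mult_right_mono) auto
    then show ?thesis using p3 by simp
  qed
  show "(ia = 0 \<and> ib = 0 \<and> k < 2) \<or> (ia = 1 \<and> ib = 1 \<and> k < 3) \<or> (ia = 1 \<and> ib = 2 \<and> k < 4) \<or> (ia = 2 \<and> ib = 1 \<and> k < 4)
     \<or> (ia = 1 \<and> ib = 3) \<or> (ia = 3 \<and> ib = 1)"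
    using int_small[OF a ia3] int_small[OF b ib3] c z
    by (elim disjE; simp)
qed
lemma E6: "E s t 6 = [s,t,s,t,s,t]" "E s t 4 = [s,t,s,t]" "E s t 3 = [t,s,t]" "E s t 2 = [s,t]"
proof -
  have "E s t (Suc (Suc (Suc (Suc (Suc (Suc 0)))))) = [s,t,s,t,s,t]" "E s t (Suc (Suc (Suc (Suc 0)))) = [s,t,s,t]"
    "E s t (Suc (Suc (Suc 0))) = [t,s,t]" "E s t (Suc (Suc 0)) = [s,t]" by simp_all
  then show "E s t 6 = [s,t,s,t,s,t]" "E s t 4 = [s,t,s,t]" "E s t 3 = [t,s,t]" "E s t 2 = [s,t]"
    by (simp_all add: numeral_eq_Suc)
qed
lemma brl: "s \<noteq> t \<Longrightarrow> cf s t 0 0 x y (E s t 2) = cf s t 0 0 x y (E t s 2)"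
  "s \<noteq> t \<Longrightarrow> cf s t 1 1 x y (E s t 3) = cf s t 1 1 x y (E t s 3)"
  "s \<noteq> t \<Longrightarrow> cf s t 1 2 x y (E s t 4) = cf s t 1 2 x y (E t s 4)"
  "s \<noteq> t \<Longrightarrow> cf s t 2 1 x y (E s t 4) = cf s t 2 1 x y (E t s 4)"
  "s \<noteq> t \<Longrightarrow> cf s t 1 3 x y (E s t 6) = cf s t 1 3 x y (E t s 6)"
  "s \<noteq> t \<Longrightarrow> cf s t 3 1 x y (E s t 6) = cf s t 3 1 x y (E t s 6)"
  by (simp_all add: E6 algebra_simps)

lemma pair_enum:
  fixes ia ib :: int
  assumes a: "0 \<le> ia" and b: "0 \<le> ib" and z: "ia = 0 \<longleftrightarrow> ib = 0" and p3: "ia * ib \<le> 3"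
  shows "(ia = 0 \<and> ib = 0) \<or> (ia = 1 \<and> ib = 1) \<or> (ia = 1 \<and> ib = 2) \<or> (ia = 2 \<and> ib = 1)
     \<or> (ia = 1 \<and> ib = 3) \<or> (ia = 3 \<and> ib = 1)"
proof -
  have ia3: "ia \<le> 3"
  proof (cases "ib = 0")
    case True then show ?thesis using z by simp
  next
    case False then have "ia * 1 \<le> ia * ib" using a b by (intro mult_left_mono) auto
    then show ?thesis using p3 by simp
  qed
  have ib3: "ib \<le> 3"
  proof (cases "ia = 0")
    case True then show ?thesis using z by simp
  next
    case False then have "1 * ib \<le> ia * ib" using a b by (intro mult_right_mono) auto
    then show ?thesis using p3 by simp
  qed
  show ?thesis
    using int_small[OF a ia3] int_small[OF b ib3] p3 z
    by (elim disjE; simp)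
qed




locale KM =
  fixes A :: "'i::finite \<Rightarrow> 'i \<Rightarrow> int" and \<alpha> \<alpha>v :: "'i \<Rightarrow> real^'n"
  assumes gc: "gen_cartan A" and aY: "\<forall>i. \<alpha> i \<in> Ylat" and avY: "\<forall>i. \<alpha>v i \<in> Ylat"
    and zfa: "Z_free \<alpha>" and zfv: "Z_free \<alpha>v"
    and pair: "\<forall>i j. \<alpha> j \<bullet> \<alpha>v i = of_int (A i j)"
begin

definition rs :: "'i \<Rightarrow> real^'n \<Rightarrow> real^'n" where
  "rs i b = b - (b \<bullet> \<alpha>v i) *\<^sub>R \<alpha> i"

primrec Wd :: "'i list \<Rightarrow> real^'n \<Rightarrow> real^'n" where
  "Wd [] = id"
| "Wd (i # w) = rs i \<circ> Wd w"

primrec WV :: "'i list \<Rightarrow> real^'n \<Rightarrow> real^'n" where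
  "WV [] = id"
| "WV (i # w) = refl_i \<alpha> \<alpha>v i \<circ> WV w"

lemma pair2: "\<alpha> i \<bullet> \<alpha>v i = 2"
  using pair gc unfolding gen_cartan_def by simp

lemma rs_rs[simp]: "rs i (rs i b) = b"
  unfolding rs_def by (simp add: inner_diff_left pair2 algebra_simps)

lemma r_r[simp]: "refl_i \<alpha> \<alpha>v i (refl_i \<alpha> \<alpha>v i v) = v"
  unfolding refl_i_def by (simp add: inner_diff_right inner_commute pair2 algebra_simps)

lemma Wd_append: "Wd (u @ v) = Wd u \<circ> Wd v"
  by (induction u) auto

lemma WV_append: "WV (u @ v) = WV u \<circ> WV v"
  by (induction u) auto

lemma rs_lin: "rs i (a *\<^sub>R x + b *\<^sub>R y) = a *\<^sub>R rs i x + b *\<^sub>R rs i y"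
  unfolding rs_def by (simp add: inner_add_left algebra_simps)

lemma Wd_lin: "Wd w (a *\<^sub>R x + b *\<^sub>R y) = a *\<^sub>R Wd w x + b *\<^sub>R Wd w y"
  by (induction w) (auto simp: rs_lin)

lemma transp: "(Wd (rev w) b) \<bullet> v = b \<bullet> (WV w v)"
  by (induction w arbitrary: b) 
     (auto simp: Wd_append rs_def refl_i_def inner_diff_left inner_diff_right algebra_simps)

lemma WV_rev_WV: "WV (rev w) (WV w v) = v"
  by (induction w arbitrary: v) (auto simp: WV_append)

lemma WV_in: "WV w \<in> Wv \<alpha> \<alpha>v"
  by (induction w) (metis WV.simps(1) Wv.Wv_id, metis WV.simps(2) Wv.Wv_step)

lemma Wv_WV: "h \<in> Wv \<alpha> \<alpha>v \<Longrightarrow> \<exists>w. h = WV w"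
proof (induction rule: Wv.induct)
  case Wv_id then show ?case by (metis WV.simps(1))
next
  case (Wv_step w i) then show ?case by (metis WV.simps(2))
qed

definition len :: "'i set \<Rightarrow> (real^'n \<Rightarrow> real^'n) \<Rightarrow> nat" where
  "len S g = (LEAST k. \<exists>w. set w \<subseteq> S \<and> length w = k \<and> Wd w = g)"

lemma len_le: "set w \<subseteq> S \<Longrightarrow> len S (Wd w) \<le> length w"
  unfolding len_def by (rule Least_le) blast

lemma len_ex: "set w \<subseteq> S \<Longrightarrow> \<exists>w'. set w' \<subseteq> S \<and> length w' = len S (Wd w) \<and> Wd w' = Wd w"
  unfolding len_def
  using LeastI_ex[of "\<lambda>k. \<exists>w'. set w' \<subseteq> S \<and> length w' = k \<and> Wd w' = Wd w"] by blast

lemma len_comp: "set u \<subseteq> S \<Longrightarrow> set v \<subseteq> S' \<Longrightarrow> S' \<subseteq> S \<Longrightarrow>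
   len S (Wd u \<circ> Wd v) \<le> len S (Wd u) + len S' (Wd v)"
proof -
  assume a: "set u \<subseteq> S" "set v \<subseteq> S'" "S' \<subseteq> S"
  obtain u' where u': "set u' \<subseteq> S" "length u' = len S (Wd u)" "Wd u' = Wd u" using len_ex[OF a(1)] by blast
  obtain v' where v': "set v' \<subseteq> S'" "length v' = len S' (Wd v)" "Wd v' = Wd v" using len_ex[OF a(2)] by blast
  have "Wd u \<circ> Wd v = Wd (u' @ v')" using u' v' by (simp add: Wd_append)
  moreover have "set (u' @ v') \<subseteq> S" using u' v' a by auto
  ultimately show ?thesis using len_le[of "u' @ v'" S] u' v' by simp
qed

definition pos :: "real^'n \<Rightarrow> bool" where
  "pos b \<longleftrightarrow> (\<exists>c. (\<forall>k. 0 \<le> c k) \<and> b = (\<Sum>k\<in>UNIV. c k *\<^sub>R \<alpha> k))"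

lemma pos_alpha: "pos (\<alpha> s)"
  unfolding pos_def
proof (rule exI[of _ "\<lambda>k. if k = s then 1 else 0"])
  have "(\<Sum>k\<in>UNIV. (if k = s then 1 else 0) *\<^sub>R \<alpha> k) = (\<Sum>k\<in>UNIV. if k = s then \<alpha> k else 0)"
    by (rule sum.cong) auto
  then show "(\<forall>k. 0 \<le> (if k = s then 1 else (0::real))) \<and> \<alpha> s = (\<Sum>k\<in>UNIV. (if k = s then 1 else 0) *\<^sub>R \<alpha> k)"
    by simp
qed

lemma pos_comb: "pos x \<Longrightarrow> pos y \<Longrightarrow> 0 \<le> a \<Longrightarrow> 0 \<le> b \<Longrightarrow> pos (a *\<^sub>R x + b *\<^sub>R y)"
  unfolding pos_def
proof (elim exE conjE)
  fix c1 c2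
  assume h: "\<forall>k. 0 \<le> c1 k" "x = (\<Sum>k\<in>UNIV. c1 k *\<^sub>R \<alpha> k)" "\<forall>k. 0 \<le> c2 k" "y = (\<Sum>k\<in>UNIV. c2 k *\<^sub>R \<alpha> k)"
    "0 \<le> a" "0 \<le> b"
  show "\<exists>c. (\<forall>k. 0 \<le> c k) \<and> a *\<^sub>R x + b *\<^sub>R y = (\<Sum>k\<in>UNIV. c k *\<^sub>R \<alpha> k)"
    by (rule exI[of _ "\<lambda>k. a * c1 k + b * c2 k"])
       (use h in \<open>simp add: scaleR_add_left sum.distrib scaleR_sum_right\<close>)
qed


lemma cf_lemma:
  assumes st: "s \<noteq> t"
  shows "set w \<subseteq> {s,t} \<Longrightarrow> Wd w b = b + fst (cf s t (- of_int (A s t)) (- of_int (A t s)) (b \<bullet> \<alpha>v s) (b \<bullet> \<alpha>v t) w) *\<^sub>R \<alpha> s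
      + snd (cf s t (- of_int (A s t)) (- of_int (A t s)) (b \<bullet> \<alpha>v s) (b \<bullet> \<alpha>v t) w) *\<^sub>R \<alpha> t"
proof (induction w)
  case Nil then show ?case by simp
next
  case (Cons j w)
  have p1: "\<alpha> s \<bullet> \<alpha>v s = 2" "\<alpha> t \<bullet> \<alpha>v t = 2" by (simp_all add: pair2)
  have p2: "\<alpha> t \<bullet> \<alpha>v s = of_int (A s t)" "\<alpha> s \<bullet> \<alpha>v t = of_int (A t s)" using pair by auto
  obtain c1 c2 where c: "cf s t (- of_int (A s t)) (- of_int (A t s)) (b \<bullet> \<alpha>v s) (b \<bullet> \<alpha>v t) w = (c1,c2)"
    by fastforce
  have IH: "Wd w b = b + c1 *\<^sub>R \<alpha> s + c2 *\<^sub>R \<alpha> t" using Cons c by simp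
  have e: "Wd (j#w) b = rs j (b + c1 *\<^sub>R \<alpha> s + c2 *\<^sub>R \<alpha> t)" using IH by simp
  have j: "j = s \<or> j = t" using Cons.prems by auto
  show ?case using e c st j
    by (auto simp: rs_def inner_add_left p1 p2 vec_eq_iff algebra_simps)
qed

lemma Wd_braid:
  assumes st: "s \<noteq> t"
    and eq: "\<And>x y. cf s t (- of_int (A s t)) (- of_int (A t s)) x y (E s t m) = cf s t (- of_int (A s t)) (- of_int (A t s)) x y (E t s m)"
  shows "Wd (E s t m) = Wd (E t s m)"
proof (rule ext)
  fix b
  have ts: "set (E t s m) \<subseteq> {s,t}" using E_set[of t s m] by auto
  show "Wd (E s t m) b = Wd (E t s m) b"
    using cf_lemma[OF st E_set[of s t m], of b] cf_lemma[OF st ts, of b] eq by simp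
qed

lemma braid_bound:
  assumes st: "s \<noteq> t" and m: "0 < m" and br: "Wd (E s t m) = Wd (E t s m)"
    and k: "k \<le> len {s,t} (Wd (E s t k @ [s]))"
  shows "k < m"
proof (rule ccontr)
  assume nk: "\<not> k < m"
  then have km: "k - m + m = k" by simp
  from E_split[of s t "k - m" m] obtain F
    where F0: "E s t (k - m + m) = F @ E s t m \<and> set F \<subseteq> {s,t} \<and> length F = k - m" ..
  note F = conjunct1[OF F0] conjunct1[OF conjunct2[OF F0]] conjunct2[OF conjunct2[OF F0]]
  have Ek: "E s t k = F @ E s t m" using F(1) unfolding km .
  from E_last[OF m, of t s] obtain G
    where G0: "E t s m = G @ [s] \<and> set G \<subseteq> {s,t} \<and> length G = m - 1" ..
  note G = conjunct1[OF G0] conjunct1[OF conjunct2[OF G0]] conjunct2[OF conjunct2[OF G0]]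
  have W1: "Wd [s] = rs s" by simp
  have "Wd (E s t k @ [s]) = Wd F \<circ> (Wd (E s t m) \<circ> rs s)"
    unfolding Ek append_assoc Wd_append W1 ..
  also have "Wd (E s t m) = Wd G \<circ> rs s" unfolding br G(1) Wd_append W1 ..
  finally have "Wd (E s t k @ [s]) = Wd F \<circ> (Wd G \<circ> (rs s \<circ> rs s))" by (simp only: comp_assoc)
  also have "rs s \<circ> rs s = id" by (simp add: fun_eq_iff)
  finally have "Wd (E s t k @ [s]) = Wd (F @ G)" by (simp only: Wd_append comp_id)
  then have "len {s,t} (Wd (E s t k @ [s])) \<le> length (F @ G)" using len_le[of "F @ G" "{s,t}"] F(2) G(2) by simp
  then have "k \<le> length (F @ G)" using k by linarith
  moreover have "length (F @ G) = k - 1" using F(3) G(3) m nk by simp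
  ultimately show False using m nk by linarith
qed

lemma rank2E:
  assumes st: "s \<noteq> t" and k: "k \<le> len {s,t} (Wd (E s t k @ [s]))"
  shows "\<exists>a b. 0 \<le> a \<and> 0 \<le> b \<and> Wd (E s t k) (\<alpha> s) = a *\<^sub>R \<alpha> s + b *\<^sub>R \<alpha> t"
proof -
  define ia where "ia = - A s t"
  define ib where "ib = - A t s"
  have a0: "0 \<le> ia" "0 \<le> ib" "ia = 0 \<longleftrightarrow> ib = 0"
    using gc st unfolding gen_cartan_def ia_def ib_def by auto
  define C where "C = cf s t (of_int ia) (of_int ib) 2 (- of_int ib) (E s t k)"
  have p2: "\<alpha> s \<bullet> \<alpha>v t = - of_int ib" using pair unfolding ib_def by simp
  have form: "Wd (E s t k) (\<alpha> s) = (1 + fst C) *\<^sub>R \<alpha> s + snd C *\<^sub>R \<alpha> t"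
    using cf_lemma[OF st E_set[of s t k], of "\<alpha> s"] unfolding C_def
    by (simp add: pair2 p2 ia_def ib_def algebra_simps)
  have br: "Wd (E s t m) = Wd (E t s m)"
    if "\<And>x y. cf s t (of_int ia) (of_int ib) x y (E s t m) = cf s t (of_int ia) (of_int ib) x y (E t s m)" for m
    using Wd_braid[OF st] that unfolding ia_def ib_def by simp
  have nn: "0 \<le> 1 + fst C \<and> 0 \<le> snd C"
  proof (cases "4 \<le> ia * ib")
    case True
    have "4 \<le> real_of_int ia * real_of_int ib" using True
      by (metis of_int_le_iff of_int_mult of_int_numeral)
    then show ?thesis using inv4[OF st, of "of_int ia" "of_int ib" k] a0 unfolding C_def by simp
  next
    case False
    then have "ia * ib \<le> 3" by simp
    from pair_enum[OF a0 this] show ?thesis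
    proof (elim disjE conjE)
      assume h: "ia = 0" "ib = 0"
      have "k < 2" by (rule braid_bound[OF st _ br k]) (use h st in \<open>simp_all add: E6 algebra_simps\<close>)
      then show ?thesis unfolding C_def by (intro cf_small_aux[OF st]) (use h in simp_all)
    next
      assume h: "ia = 1" "ib = 1"
      have "k < 3" by (rule braid_bound[OF st _ br k]) (use h st in \<open>simp_all add: E6 algebra_simps\<close>)
      then show ?thesis unfolding C_def by (intro cf_small_aux[OF st]) (use h in simp_all)
    next
      assume h: "ia = 1" "ib = 2"
      have "k < 4" by (rule braid_bound[OF st _ br k]) (use h st in \<open>simp_all add: E6 algebra_simps\<close>)
      then show ?thesis unfolding C_def by (intro cf_small_aux[OF st]) (use h in simp_all)
    next
      assume h: "ia = 2" "ib = 1"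
      have "k < 4" by (rule braid_bound[OF st _ br k]) (use h st in \<open>simp_all add: E6 algebra_simps\<close>)
      then show ?thesis unfolding C_def by (intro cf_small_aux[OF st]) (use h in simp_all)
    next
      assume h: "ia = 1" "ib = 3"
      have "k < 6" by (rule braid_bound[OF st _ br k]) (use h st in \<open>simp_all add: E6 algebra_simps\<close>)
      then show ?thesis unfolding C_def by (intro cf_small_aux[OF st]) (use h in simp_all)
    next
      assume h: "ia = 3" "ib = 1"
      have "k < 6" by (rule braid_bound[OF st _ br k]) (use h st in \<open>simp_all add: E6 algebra_simps\<close>)
      then show ?thesis unfolding C_def by (intro cf_small_aux[OF st]) (use h in simp_all)
    qed
  qed
  then show ?thesis using form by (intro exI[of _ "1 + fst C"] exI[of _ "snd C"]) simp
qed

lemma rank2: "s \<noteq> t \<Longrightarrow> set v \<subseteq> {s,t} \<Longrightarrow> len {s,t} (Wd (v@[s])) \<ge> len {s,t} (Wd v) \<Longrightarrow>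
  \<exists>a b. 0 \<le> a \<and> 0 \<le> b \<and> Wd v (\<alpha> s) = a *\<^sub>R \<alpha> s + b *\<^sub>R \<alpha> t"
proof -
  assume st: "s \<noteq> t" and v: "set v \<subseteq> {s,t}" and L: "len {s,t} (Wd (v@[s])) \<ge> len {s,t} (Wd v)"
  obtain v0 where v0: "set v0 \<subseteq> {s,t}" "length v0 = len {s,t} (Wd v)" "Wd v0 = Wd v"
    using len_ex[OF v] by blast
  have nd: "\<forall>p x q. v0 \<noteq> p @ [x,x] @ q"
  proof (intro allI notI)
    fix p x q assume h: "v0 = p @ [x,x] @ q"
    have "Wd v0 = Wd p \<circ> (rs x \<circ> rs x) \<circ> Wd q" using h by (simp add: Wd_append comp_assoc)
    also have "rs x \<circ> rs x = id" by (simp add: fun_eq_iff)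
    finally have "Wd v0 = Wd (p @ q)" by (simp add: Wd_append comp_def)
    then have "len {s,t} (Wd v0) \<le> length (p @ q)" using len_le[of "p@q" "{s,t}"] h v0(1) by auto
    then show False using h v0 by simp
  qed
  have lt: "v0 = [] \<or> last v0 = t"
  proof (rule ccontr)
    assume "\<not> ?thesis"
    then have ne: "v0 \<noteq> []" and "last v0 \<noteq> t" by auto
    have "last v0 \<in> {s,t}" using v0(1) last_in_set[OF ne] by blast
    then have ls: "last v0 = s" using \<open>last v0 \<noteq> t\<close> by blast
    define v1 where "v1 = butlast v0"
    have vv: "v0 = v1 @ [s]" using ne ls unfolding v1_def by (metis append_butlast_last_id)
    have "Wd (v @ [s]) = Wd v0 \<circ> rs s" using v0(3) by (simp add: Wd_append)
    also have "\<dots> = Wd v1 \<circ> (rs s \<circ> rs s)" using vv by (simp add: Wd_append comp_assoc)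
    also have "rs s \<circ> rs s = id" by (simp add: fun_eq_iff)
    finally have "Wd (v @ [s]) = Wd v1" by simp
    then have "len {s,t} (Wd (v @ [s])) \<le> length v1" using len_le[of v1 "{s,t}"] vv v0(1) by auto
    then show False using L v0(2) vv by simp
  qed
  have vE: "v0 = E s t (length v0)" by (rule alt_E[OF st v0(1) nd lt])
  have WE0: "Wd (E s t (length v0)) = Wd v0" using arg_cong[OF vE[symmetric], of Wd] .
  have WE: "Wd (E s t (length v0)) = Wd v" using WE0 v0(3) by simp
  have "Wd (E s t (length v0) @ [s]) = Wd (v @ [s])" using WE by (simp add: Wd_append)
  then have "length v0 \<le> len {s,t} (Wd (E s t (length v0) @ [s]))" using L v0(2) by simp
  from rank2E[OF st this] show ?thesis unfolding WE .
qed

lemma H: "len UNIV (Wd w) = n \<Longrightarrow> len UNIV (Wd (w@[s])) \<ge> n \<Longrightarrow> pos (Wd w (\<alpha> s))"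
proof (induction n arbitrary: w s rule: less_induct)
  case (less n w s)
  show ?case
  proof (cases "n = 0")
    case True
    obtain w0 where "length w0 = 0" "Wd w0 = Wd w" using len_ex[of w UNIV] less.prems True by auto
    then have "Wd w = id" by simp
    thus ?thesis using pos_alpha by simp
  next
    case False
    obtain w0 where w0: "length w0 = n" "Wd w0 = Wd w" using len_ex[of w UNIV] less.prems by auto
    then obtain w1 t where w1: "w0 = w1 @ [t]" using False by (metis length_0_conv rev_exhaust)
    have Lw1: "len UNIV (Wd w1) \<le> n - 1" using len_le[of w1 UNIV] w0 w1 by simp
    have ts: "t \<noteq> s"
    proof
      assume "t = s"
      then have "Wd (w @ [s]) = Wd w1" using w0 w1 by (auto simp: Wd_append fun_eq_iff) (metis rs_rs)
      then show False using Lw1 less.prems False by simp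
    qed
    define Q where "Q k \<longleftrightarrow> (\<exists>u v. set v \<subseteq> {s,t} \<and> Wd w = Wd u \<circ> Wd v \<and>
         len UNIV (Wd u) + len {s,t} (Wd v) \<le> n \<and> len UNIV (Wd u) = k)" for k
    have "len {s,t} (Wd [t]) \<le> 1" using len_le[of "[t]" "{s,t}"] by simp
    then have Q1: "Q (len UNIV (Wd w1))" unfolding Q_def
      using w0 w1 Lw1 False
      by (intro exI[of _ w1] exI[of _ "[t]"]) (auto simp: Wd_append)
    define m where "m = (LEAST k. Q k)"
    have "Q m" unfolding m_def using Q1 by (rule LeastI)
    then obtain u v where uv: "set v \<subseteq> {s,t}" "Wd w = Wd u \<circ> Wd v"
       "len UNIV (Wd u) + len {s,t} (Wd v) \<le> n" "len UNIV (Wd u) = m" unfolding Q_def by blast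
    have "m \<le> len UNIV (Wd w1)" unfolding m_def using Q1 by (rule Least_le)
    then have mn: "m < n" using Lw1 False by simp
    have "len UNIV (Wd w) \<le> len UNIV (Wd u) + len {s,t} (Wd v)"
      unfolding uv(2) by (rule len_comp) (use uv in auto)
    then have "n \<le> len UNIV (Wd u) + len {s,t} (Wd v)" using less.prems(1) by simp
    then have sumeq: "len UNIV (Wd u) + len {s,t} (Wd v) = n" using uv by simp
    have ur: "len UNIV (Wd (u@[r])) \<ge> len UNIV (Wd u)" if r: "r \<in> {s,t}" for r
    proof (rule ccontr)
      assume nl: "\<not> ?thesis"
      obtain u' where u': "length u' = len UNIV (Wd (u@[r]))" "Wd u' = Wd (u@[r])"
        using len_ex[of "u@[r]" UNIV] by auto
      obtain v' where v': "set v' \<subseteq> {s,t}" "length v' = len {s,t} (Wd v)" "Wd v' = Wd v"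
        using len_ex[OF uv(1)] by blast
      have e: "Wd w = Wd u' \<circ> Wd (r # v')"
      proof -
        have "Wd u' \<circ> Wd (r # v') = Wd u \<circ> (rs r \<circ> rs r) \<circ> Wd v"
          using u'(2) v'(3) by (simp add: Wd_append comp_assoc)
        also have "rs r \<circ> rs r = id" by (simp add: fun_eq_iff)
        finally show ?thesis using uv(2) by (simp add: comp_def)
      qed
      have l1: "len {s,t} (Wd (r#v')) \<le> length v' + 1"
        using len_le[of "r#v'" "{s,t}"] v' r by simp
      have l2: "len UNIV (Wd u') < m" using len_le[of u' UNIV] u' nl uv by simp
      have "Q (len UNIV (Wd u'))" unfolding Q_def
      proof (intro exI conjI)
        show "set (r#v') \<subseteq> {s,t}" using v' r by auto
        show "Wd w = Wd u' \<circ> Wd (r # v')" by (rule e)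
        show "len UNIV (Wd u') + len {s, t} (Wd (r # v')) \<le> n" using l1 l2 v'(2) sumeq uv(4) by linarith
      qed simp
      then have "Q (len UNIV (Wd u'))" "len UNIV (Wd u') < m" using l2 by auto
      then show False unfolding m_def using not_less_Least by blast
    qed
    have IHs: "pos (Wd u (\<alpha> s))" using less.IH[OF mn, of u s] uv(4) ur[of s] by simp
    have IHt: "pos (Wd u (\<alpha> t))" using less.IH[OF mn, of u t] uv(4) ur[of t] by simp
    have "Wd (w @ [s]) = Wd u \<circ> Wd (v @ [s])" using uv by (auto simp: Wd_append)
    moreover have "set (v @ [s]) \<subseteq> {s,t}" using uv by auto
    ultimately have "len UNIV (Wd (w @ [s])) \<le> len UNIV (Wd u) + len {s,t} (Wd (v@[s]))"
      using len_comp[of u UNIV "v@[s]" "{s,t}"] by simp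
    then have "n \<le> len UNIV (Wd u) + len {s,t} (Wd (v@[s]))" using less.prems(2) by simp
    then have LI: "len {s,t} (Wd (v@[s])) \<ge> len {s,t} (Wd v)" using sumeq by simp
    obtain a b where ab: "0 \<le> a" "0 \<le> b" "Wd v (\<alpha> s) = a *\<^sub>R \<alpha> s + b *\<^sub>R \<alpha> t"
      using rank2[OF ts[symmetric] uv(1) LI] by blast
    have "Wd w (\<alpha> s) = a *\<^sub>R Wd u (\<alpha> s) + b *\<^sub>R Wd u (\<alpha> t)"
      using uv(2) ab(3) by (simp add: Wd_lin)
    then show ?thesis using pos_comb[OF IHs IHt ab(1,2)] by simp
  qed
qed


lemma Ylat_inner: "u \<in> Ylat \<Longrightarrow> v \<in> Ylat \<Longrightarrow> u \<bullet> v \<in> \<int>"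
  unfolding Ylat_def inner_vec_def by (auto intro!: Ints_sum Ints_mult)

lemma refl_Ylat: "v \<in> Ylat \<Longrightarrow> refl_i \<alpha> \<alpha>v i v \<in> Ylat"
proof -
  assume v: "v \<in> Ylat"
  have c: "\<alpha> i \<bullet> v \<in> \<int>" using Ylat_inner aY v by blast
  show ?thesis using v c avY unfolding Ylat_def refl_i_def by (auto intro!: Ints_diff Ints_mult)
qed

lemma WV_Ylat: "v \<in> Ylat \<Longrightarrow> WV w v \<in> Ylat"
  by (induction w) (auto intro: refl_Ylat)

lemma pos_dom: "pos b \<Longrightarrow> \<forall>i. 0 \<le> \<alpha> i \<bullet> y \<Longrightarrow> 0 \<le> b \<bullet> y"
  unfolding pos_def by (auto simp: inner_sum_left intro!: sum_nonneg)

lemma red_prefix: "len UNIV (Wd (p @ q)) = length (p @ q) \<Longrightarrow> len UNIV (Wd p) = length p"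
proof (rule ccontr)
  assume h: "len UNIV (Wd (p @ q)) = length (p @ q)" and n: "len UNIV (Wd p) \<noteq> length p"
  then have lt: "len UNIV (Wd p) < length p" using len_le[of p UNIV] by simp
  obtain p' where p': "length p' = len UNIV (Wd p)" "Wd p' = Wd p" using len_ex[of p UNIV] by auto
  have "Wd (p' @ q) = Wd (p @ q)" using p' by (simp add: Wd_append)
  then have "len UNIV (Wd (p @ q)) \<le> length (p' @ q)" using len_le[of "p'@q" UNIV] by simp
  then show False using h lt p' by simp
qed

lemma Qplus_mem: "x \<in> Qplus \<alpha>v \<longleftrightarrow> (\<exists>m. x = (\<Sum>i\<in>UNIV. of_nat (m i) *\<^sub>R \<alpha>v i))"
  unfolding Qplus_def by auto

lemma D_words: "y \<in> Ylat \<Longrightarrow> (\<forall>i. 0 \<le> \<alpha> i \<bullet> y) \<Longrightarrow> len UNIV (Wd (rev w)) = length w \<Longrightarrow>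
   y - WV w y \<in> Qplus \<alpha>v"
proof (induction w)
  case Nil
  show ?case unfolding Qplus_mem by (rule exI[of _ "\<lambda>_. 0"]) simp
next
  case (Cons i w)
  have r: "len UNIV (Wd (rev w @ [i])) = length (rev w @ [i])" using Cons.prems(3) by simp
  have rw: "len UNIV (Wd (rev w)) = length w" using red_prefix[OF r] by simp
  from Cons.IH[OF Cons.prems(1,2) rw] obtain m where m: "y - WV w y = (\<Sum>j\<in>UNIV. of_nat (m j) *\<^sub>R \<alpha>v j)"
    unfolding Qplus_mem by blast
  have "pos (Wd (rev w) (\<alpha> i))" using H[OF rw] r by simp
  then have "0 \<le> (Wd (rev w) (\<alpha> i)) \<bullet> y" using pos_dom Cons.prems(2) by blast
  then have c0: "0 \<le> \<alpha> i \<bullet> WV w y" using transp by simp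
  have cI: "\<alpha> i \<bullet> WV w y \<in> \<int>" using Ylat_inner aY WV_Ylat Cons.prems(1) by blast
  then obtain ci where ci: "\<alpha> i \<bullet> WV w y = of_int ci" by (auto elim: Ints_cases)
  have ci0: "0 \<le> ci" using c0 ci by simp
  define m' where "m' j = m j + (if j = i then nat ci else 0)" for j
  have "y - WV (i # w) y = (y - WV w y) + of_int ci *\<^sub>R \<alpha>v i"
    using ci by (simp add: refl_i_def)
  also have "\<dots> = (\<Sum>j\<in>UNIV. of_nat (m' j) *\<^sub>R \<alpha>v j)"
  proof -
    have "(\<Sum>j\<in>UNIV. of_nat (m' j) *\<^sub>R \<alpha>v j) = (\<Sum>j\<in>UNIV. of_nat (m j) *\<^sub>R \<alpha>v j
       + (if j = i then of_int ci *\<^sub>R \<alpha>v j else 0))"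
      by (rule sum.cong) (auto simp: m'_def ci0 scaleR_add_left)
    also have "\<dots> = (\<Sum>j\<in>UNIV. of_nat (m j) *\<^sub>R \<alpha>v j)
       + (\<Sum>j\<in>UNIV. (if j = i then of_int ci *\<^sub>R \<alpha>v j else 0))" by (rule sum.distrib)
    also have "(\<Sum>j\<in>UNIV. (if j = i then of_int ci *\<^sub>R \<alpha>v j else 0)) = of_int ci *\<^sub>R \<alpha>v i" by simp
    finally show ?thesis using m by simp
  qed
  finally show ?case unfolding Qplus_mem by blast
qed

lemma inner_ext: "(\<And>b. b \<bullet> u = b \<bullet> (v::real^'n)) \<Longrightarrow> u = v"
proof -
  assume h: "\<And>b. b \<bullet> u = b \<bullet> v"
  have "(u - v) \<bullet> (u - v) = 0" using h[of "u - v"] by (simp add: inner_diff_right)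
  then show "u = v" by simp
qed

lemma D: "y \<in> Ylat \<Longrightarrow> (\<forall>i. 0 \<le> \<alpha> i \<bullet> y) \<Longrightarrow> h \<in> Wv \<alpha> \<alpha>v \<Longrightarrow> y - h y \<in> Qplus \<alpha>v"
proof -
  assume y: "y \<in> Ylat" and d: "\<forall>i. 0 \<le> \<alpha> i \<bullet> y" and h: "h \<in> Wv \<alpha> \<alpha>v"
  obtain w where w: "h = WV w" using Wv_WV[OF h] by blast
  obtain u where u: "length u = len UNIV (Wd (rev w))" "Wd u = Wd (rev w)" using len_ex[of "rev w" UNIV] by auto
  have "WV (rev u) v = WV w v" for v
  proof (rule inner_ext)
    fix b
    have "b \<bullet> WV (rev u) v = Wd (rev (rev u)) b \<bullet> v" using transp[of "rev u" b v] by simp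
    also have "\<dots> = Wd (rev w) b \<bullet> v" using u by simp
    also have "\<dots> = b \<bullet> WV w v" by (rule transp)
    finally show "b \<bullet> WV (rev u) v = b \<bullet> WV w v" .
  qed
  then have e: "h = WV (rev u)" using w by auto
  have "len UNIV (Wd (rev (rev u))) = length (rev u)" using u by simp
  from D_words[OF y d this] show ?thesis using e by simp
qed

lemma den: "\<exists>D::int. D > 0 \<and> (\<forall>i. of_int D * (c::'i \<Rightarrow> rat) i \<in> \<int>)"
proof -
  define d where "d i = snd (quotient_of (c i))" for i
  define D where "D = (\<Prod>i\<in>UNIV. d i)"
  have dpos: "d i > 0" for i unfolding d_def by (rule quotient_of_denom_pos')
  have "D > 0" unfolding D_def using dpos by (simp add: prod_pos)
  moreover have "of_int D * c i \<in> \<int>" for i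
  proof -
    have ci: "c i = of_int (fst (quotient_of (c i))) / of_int (d i)"
      unfolding d_def by (rule quotient_of_div) simp
    have "D = d i * (\<Prod>j\<in>UNIV - {i}. d j)" unfolding D_def by (simp add: prod.remove)
    then have "of_int D * c i = of_int (fst (quotient_of (c i))) * of_int (\<Prod>j\<in>UNIV - {i}. d j)"
      using dpos[of i] ci by (simp add: field_simps)
    then show ?thesis by (auto intro!: Ints_mult Ints_prod)
  qed
  ultimately show ?thesis by blast
qed

lemma cvf_point: "\<exists>c. \<forall>i. \<alpha> i \<bullet> c = 1"
proof -
  define M :: "rat^'n^'i" where "M = (\<chi> i k. of_int \<lfloor>\<alpha> i $ k\<rfloor>)"
  have Mr: "real_of_rat (M $ i $ k) = \<alpha> i $ k" for i k
  proof -
    have "\<alpha> i $ k \<in> \<int>" using aY unfolding Ylat_def by auto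
    then obtain z where "\<alpha> i $ k = of_int z" by (auto elim: Ints_cases)
    then show ?thesis unfolding M_def by simp
  qed
  have indep: "\<forall>c. (\<Sum>i\<in>UNIV. c i *s row i M) = 0 \<longrightarrow> (\<forall>i. c i = 0)"
  proof (rule allI, rule impI)
    fix c :: "'i \<Rightarrow> rat"
    assume h: "(\<Sum>i\<in>UNIV. c i *s row i M) = 0"
    have comp: "(\<Sum>i\<in>UNIV. c i * M $ i $ k) = 0" for k
      using arg_cong[OF h, of "\<lambda>v. v $ k"] by (simp add: row_def)
    obtain D :: int where D: "D > 0" "\<forall>i. of_int D * c i \<in> \<int>" using den by blast
    define ci where "ci i = \<lfloor>of_int D * c i\<rfloor>" for i
    have cie: "of_int (ci i) = of_int D * c i" for i
    proof -
      obtain z where z: "of_int D * c i = of_int z" using D(2) by (auto elim: Ints_cases)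
      show ?thesis unfolding ci_def z by simp
    qed
    have "(\<Sum>i\<in>UNIV. of_int (ci i) *\<^sub>R \<alpha> i) = 0"
    proof (subst vec_eq_iff, intro allI)
      fix k
      have e3: "(\<Sum>i\<in>UNIV. of_int (ci i) * M $ i $ k) = of_int D * (\<Sum>i\<in>UNIV. c i * M $ i $ k)"
        by (simp add: cie sum_distrib_left mult.assoc)
      have "(\<Sum>i\<in>UNIV. of_int (ci i) *\<^sub>R \<alpha> i) $ k = (\<Sum>i\<in>UNIV. real_of_rat (of_int (ci i) * M $ i $ k))"
        by (simp add: Mr of_rat_mult)
      also have "\<dots> = real_of_rat (\<Sum>i\<in>UNIV. of_int (ci i) * M $ i $ k)" by (simp add: of_rat_sum)
      also have "\<dots> = 0" using e3 comp by simp
      finally show "(\<Sum>i\<in>UNIV. of_int (ci i) *\<^sub>R \<alpha> i) $ k = 0 $ k" using comp by simp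
    qed
    then have "\<forall>i. ci i = 0" using zfa unfolding Z_free_def by blast
    then have "of_int D * c i = 0" for i using cie[of i] by simp
    then show "\<forall>i. c i = 0" using D(1) by simp
  qed
  obtain B :: "rat^'i^'n" where B: "M ** B = mat 1"
    using iffD2[OF matrix_right_invertible_independent_rows indep] by (elim exE)
  define cq where "cq = B *v (\<chi> i. (1::rat))"
  have Mc: "M *v cq = (\<chi> i. 1)" unfolding cq_def matrix_vector_mul_assoc B by simp
  define c where "c = (\<chi> k. real_of_rat (cq $ k))"
  have "\<alpha> i \<bullet> c = 1" for i
  proof -
    have "\<alpha> i \<bullet> c = (\<Sum>k\<in>UNIV. real_of_rat (M $ i $ k * cq $ k))"
      unfolding c_def inner_vec_def by (simp add: Mr of_rat_mult)
    also have "\<dots> = real_of_rat ((M *v cq) $ i)" by (simp add: of_rat_sum matrix_vector_mult_def)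
    finally show ?thesis using Mc by simp
  qed
  then show ?thesis by blast
qed


lemma dom_closed: "closure (Cvf \<alpha>) \<subseteq> {v. \<forall>i. 0 \<le> \<alpha> i \<bullet> v}"
proof (rule closure_minimal)
  show "Cvf \<alpha> \<subseteq> {v. \<forall>i. 0 \<le> \<alpha> i \<bullet> v}" unfolding Cvf_def by (auto intro: less_imp_le)
  show "closed {v. \<forall>i. 0 \<le> \<alpha> i \<bullet> v}"
    by (intro closed_Collect_all closed_Collect_le continuous_intros)
qed

lemma dom_in_closure: "\<forall>i. 0 \<le> \<alpha> i \<bullet> z \<Longrightarrow> z \<in> closure (Cvf \<alpha>)"
proof -
  assume d: "\<forall>i. 0 \<le> \<alpha> i \<bullet> z"
  obtain c0 where c0: "\<forall>i. \<alpha> i \<bullet> c0 = 1" using cvf_point by blast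
  show ?thesis unfolding closure_approachable
  proof (intro allI impI)
    fix e :: real assume e: "0 < e"
    define dl where "dl = e / (2 * (norm c0 + 1))"
    have n1: "0 < 2 * (norm c0 + 1)" by (simp add: add_nonneg_pos)
    have dl0: "0 < dl" unfolding dl_def using e n1 by (rule divide_pos_pos)
    have "dl * norm c0 < e"
    proof -
      have "dl * norm c0 = e * (norm c0 / (2 * (norm c0 + 1)))" unfolding dl_def by simp
      also have "norm c0 / (2 * (norm c0 + 1)) < 1" by (subst divide_less_eq_1_pos[OF n1]) (simp add: add_nonneg_pos)
      then have "e * (norm c0 / (2 * (norm c0 + 1))) < e * 1" using e by (intro mult_strict_left_mono)
      finally show ?thesis by simp
    qed
    moreover have "z + dl *\<^sub>R c0 \<in> Cvf \<alpha>" unfolding Cvf_def using d c0 dl0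
      by (auto simp: inner_add_right add_nonneg_pos)
    moreover have "dist (z + dl *\<^sub>R c0) z = dl * norm c0" using dl0 by (simp add: dist_norm)
    ultimately show "\<exists>y\<in>Cvf \<alpha>. dist y z < e" by metis
  qed
qed

lemma main: "x \<in> Ylat \<Longrightarrow> (\<exists>y\<in>Ylat. \<forall>z\<in>(\<lambda>w. w x) ` Wv \<alpha> \<alpha>v. qle \<alpha>v z y) \<longleftrightarrow> x \<in> Ylat \<inter> tits_cone \<alpha> \<alpha>v"
proof
  assume xY: "x \<in> Ylat" and "\<exists>y\<in>Ylat. \<forall>z\<in>(\<lambda>w. w x) ` Wv \<alpha> \<alpha>v. qle \<alpha>v z y"
  then obtain y where yY: "y \<in> Ylat" and bd: "\<forall>z\<in>(\<lambda>w. w x) ` Wv \<alpha> \<alpha>v. qle \<alpha>v z y" by blast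
  have bd': "\<exists>m. y - h x = (\<Sum>j\<in>UNIV. of_nat (m j) *\<^sub>R \<alpha>v j)" if "h \<in> Wv \<alpha> \<alpha>v" for h
    using bd that unfolding qle_def Qplus_mem by blast
  define P where "P N \<longleftrightarrow> (\<exists>h\<in>Wv \<alpha> \<alpha>v. \<exists>m. y - h x = (\<Sum>j\<in>UNIV. of_nat (m j) *\<^sub>R \<alpha>v j) \<and> N = (\<Sum>j\<in>UNIV. m j))" for N
  obtain m0 where "y - id x = (\<Sum>j\<in>UNIV. of_nat (m0 j) *\<^sub>R \<alpha>v j)" using bd'[OF Wv.Wv_id] by blast
  then have P0: "P (\<Sum>j\<in>UNIV. m0 j)" unfolding P_def using Wv.Wv_id by blast
  define N0 where "N0 = (LEAST N. P N)"
  have "P N0" unfolding N0_def using P0 by (rule LeastI)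
  then obtain h m where h: "h \<in> Wv \<alpha> \<alpha>v" and hm: "y - h x = (\<Sum>j\<in>UNIV. of_nat (m j) *\<^sub>R \<alpha>v j)"
    and N0: "N0 = (\<Sum>j\<in>UNIV. m j)" unfolding P_def by blast
  obtain w where w: "h = WV w" using Wv_WV[OF h] by blast
  define z where "z = h x"
  have zY: "z \<in> Ylat" unfolding z_def w using WV_Ylat[OF xY] .
  have dom: "0 \<le> \<alpha> i \<bullet> z" for i
  proof (rule ccontr)
    assume "\<not> 0 \<le> \<alpha> i \<bullet> z"
    then have neg: "\<alpha> i \<bullet> z < 0" by simp
    have "\<alpha> i \<bullet> z \<in> \<int>" using Ylat_inner aY zY by blast
    then obtain ci where ci: "\<alpha> i \<bullet> z = of_int ci" by (auto elim: Ints_cases)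
    have ci0: "ci < 0" using neg ci by simp
    have h2: "refl_i \<alpha> \<alpha>v i \<circ> h \<in> Wv \<alpha> \<alpha>v" using h by (rule Wv.Wv_step)
    obtain m' where m': "y - (refl_i \<alpha> \<alpha>v i \<circ> h) x = (\<Sum>j\<in>UNIV. of_nat (m' j) *\<^sub>R \<alpha>v j)"
      using bd'[OF h2] by blast
    have r: "(refl_i \<alpha> \<alpha>v i \<circ> h) x = z - of_int ci *\<^sub>R \<alpha>v i" using ci
      by (simp add: refl_i_def z_def)
    have "(\<Sum>j\<in>UNIV. of_nat (m' j) *\<^sub>R \<alpha>v j) = y - (z - of_int ci *\<^sub>R \<alpha>v i)" using m' r by simp
    also have "\<dots> = (y - z) + of_int ci *\<^sub>R \<alpha>v i" by simp
    also have "y - z = (\<Sum>j\<in>UNIV. of_nat (m j) *\<^sub>R \<alpha>v j)" using hm unfolding z_def .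
    finally have eq: "(\<Sum>j\<in>UNIV. of_nat (m' j) *\<^sub>R \<alpha>v j) = (\<Sum>j\<in>UNIV. of_nat (m j) *\<^sub>R \<alpha>v j) + of_int ci *\<^sub>R \<alpha>v i" .
    define cc where "cc j = int (m' j) - int (m j) - (if j = i then ci else 0)" for j
    have "(\<Sum>j\<in>UNIV. of_int (cc j) *\<^sub>R \<alpha>v j) = (\<Sum>j\<in>UNIV. of_nat (m' j) *\<^sub>R \<alpha>v j
        - of_nat (m j) *\<^sub>R \<alpha>v j - (if j = i then of_int ci *\<^sub>R \<alpha>v j else 0))"
      by (rule sum.cong) (auto simp: cc_def scaleR_diff_left)
    also have "\<dots> = (\<Sum>j\<in>UNIV. of_nat (m' j) *\<^sub>R \<alpha>v j) - (\<Sum>j\<in>UNIV. of_nat (m j) *\<^sub>R \<alpha>v j)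
        - (\<Sum>j\<in>UNIV. (if j = i then of_int ci *\<^sub>R \<alpha>v j else 0))" by (simp add: sum_subtractf)
    also have "\<dots> = 0" using eq by simp
    finally have "\<forall>j. cc j = 0" using zfv unfolding Z_free_def by blast
    then have "(\<Sum>j\<in>UNIV. cc j) = 0" by simp
    moreover have "(\<Sum>j\<in>UNIV. cc j) = int (\<Sum>j\<in>UNIV. m' j) - int (\<Sum>j\<in>UNIV. m j) - ci"
      unfolding cc_def by (simp add: sum_subtractf of_nat_sum)
    ultimately have "int (\<Sum>j\<in>UNIV. m' j) < int (\<Sum>j\<in>UNIV. m j)" using ci0 by linarith
    then have lt: "(\<Sum>j\<in>UNIV. m' j) < N0" unfolding N0 using of_nat_less_iff by blast
    have "P (\<Sum>j\<in>UNIV. m' j)" unfolding P_def using h2 m' by blast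
    then show False using lt unfolding N0_def using not_less_Least by blast
  qed
  have zc: "z \<in> closure (Cvf \<alpha>)" using dom dom_in_closure by blast
  have "x = WV (rev w) z" unfolding z_def w by (simp add: WV_rev_WV)
  then have "x \<in> WV (rev w) ` closure (Cvf \<alpha>)" using zc by blast
  then have "x \<in> tits_cone \<alpha> \<alpha>v" unfolding tits_cone_def using WV_in by blast
  then show "x \<in> Ylat \<inter> tits_cone \<alpha> \<alpha>v" using xY by blast
next
  assume "x \<in> Ylat \<inter> tits_cone \<alpha> \<alpha>v"
  then have xY: "x \<in> Ylat" and "x \<in> tits_cone \<alpha> \<alpha>v" by auto
  then obtain h y0 where h: "h \<in> Wv \<alpha> \<alpha>v" and y0: "y0 \<in> closure (Cvf \<alpha>)" and xh: "x = h y0"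
    unfolding tits_cone_def by blast
  obtain w where w: "h = WV w" using Wv_WV[OF h] by blast
  have y0x: "y0 = WV (rev w) x" using xh w by (simp add: WV_rev_WV)
  have y0Y: "y0 \<in> Ylat" using y0x WV_Ylat[OF xY] by simp
  have d: "\<forall>i. 0 \<le> \<alpha> i \<bullet> y0" using dom_closed y0 by blast
  have "qle \<alpha>v z y0" if zz: "z \<in> (\<lambda>w. w x) ` Wv \<alpha> \<alpha>v" for z
  proof -
    obtain h' where h': "h' \<in> Wv \<alpha> \<alpha>v" "z = h' x" using zz by blast
    obtain w' where w': "h' = WV w'" using Wv_WV[OF h'(1)] by blast
    have "z = WV (w' @ w) y0" using h' w' xh w by (simp add: WV_append)
    then show ?thesis unfolding qle_def using D[OF y0Y d WV_in[of "w' @ w"]] by simp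
  qed
  then show "\<exists>y\<in>Ylat. \<forall>z\<in>(\<lambda>w. w x) ` Wv \<alpha> \<alpha>v. qle \<alpha>v z y" using y0Y by blast
qed

end

theorem mainTheorem4:
  fixes A :: "'i::finite \<Rightarrow> 'i \<Rightarrow> int"
    and \<alpha> \<alpha>v :: "'i \<Rightarrow> real^'n"
    and x :: "real^'n"
  assumes "gen_cartan A"
    and "\<forall>i. \<alpha> i \<in> Ylat" and "\<forall>i. \<alpha>v i \<in> Ylat"
    and "Z_free \<alpha>" and "Z_free \<alpha>v"
    and "\<forall>i j. \<alpha> j \<bullet> \<alpha>v i = of_int (A i j)"
    and "x \<in> Ylat"
  shows "(\<exists>y\<in>Ylat. \<forall>z\<in>(\<lambda>w. w x) ` Wv \<alpha> \<alpha>v. qle \<alpha>v z y) \<longleftrightarrow> x \<in> Ylat \<inter> tits_cone \<alpha> \<alpha>v"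
proof -
  interpret KM A \<alpha> \<alpha>v using assms(1-6) by unfold_locales
  show ?thesis using main[OF assms(7)] .
qed

end
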